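(* Let $O$ be a total order of cardinality $\aleph$ (finite or infinite), and let $\alpha(\aleph)$ be the least ordinal of cardinality $\aleph$. Then $O$ has a strict binary questionable representation of length at most $\alpha(\aleph)+1$; more precisely, there is an order embedding of $O$ into $\mathrm{Next}(1,\alpha(\aleph)+1,(O^{0,1})_{\alpha(\aleph)+1})$ in which any two distinct images have a question.
   Context: Orders are partial orders (strict relation $<$); for elements $x,y$ we write $x\sim y$ when $x\neq y$ and neither $x<y$ nor $y<x$. $O^{0,1}$ denotes the two-element total order $0<1$. For an ordinal $j$, a sequence of orders $\mathcal O_j=(O_k)_{k<j}$ is indexed by the ordinals $k<j$; $(O')_j$ denotes the constant sequence with all items equal to $O'$. For an ordinal $\ell\le j$, a word of length $\ell$ over $\mathcal O_j$ is a sequence $X=(x_k)_{k<\ell}$ with $x_k\in\mathrm{Dom}(O_k)$. For two words $X,Y$, if there is a least ordinal $k<\min(\mathrm{len}X,\mathrm{len}Y)$ with $x_k\ne y_k$, then $(k,x_k,y_k)$ is the question of $X,Y$; otherwise $X,Y$ have no question. For ordinals $i<j$, $\mathrm{Next}(i,j,\mathcal O_j)$ is the partial order whose domain is the set of all words over $\mathcal O_j$ of length $\ell$ with $i\le\ell<j$, where $X<Y$ iff $X,Y$ have a question $(k,x_k,y_k)$ with $x_k<y_k$ in $O_k$; words with no question, or whose question has $x_k\sim y_k$ in $O_k$, are incomparable. A questionable representation of an order $O$ is an injective map $f$ from $\mathrm{Dom}(O)$ into $\mathrm{Dom}(\mathrm{Next}(i,j,\mathcal O_j))$ (for some $i<j$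 and $\mathcal O_j$) such that for all $x,y$: $f(x)<f(y)$ iff $x<y$ (so incomparability is also preserved). Its length is $j$, its width is the supremum of the cardinalities of the $\mathrm{Dom}(O_k)$, $k<j$. It is strict if any two distinct images have a question, total if every $O_k$ is a total order, and binary if it is total of width 2. *)

theory Defs
  imports Main
begin

definition strict_order_on :: "'a set \<Rightarrow> ('a \<Rightarrow> 'a \<Rightarrow> bool) \<Rightarrow> bool" where
  "strict_order_on D lt \<longleftrightarrow>
     (\<forall>x\<in>D. \<not> lt x x) \<and>
     (\<forall>x\<in>D. \<forall>y\<in>D. \<forall>z\<in>D. lt x y \<longrightarrow> lt y z \<longrightarrow> lt x z)"

definition total_strict_order_on :: "'a set \<Rightarrow> ('a \<Rightarrow> 'a \<Rightarrow> bool) \<Rightarrow> bool" where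
  "total_strict_order_on D lt \<longleftrightarrow> strict_order_on D lt \<and>
     (\<forall>x\<in>D. \<forall>y\<in>D. x \<noteq> y \<longrightarrow> lt x y \<or> lt y x)"

(* Positions (ordinals k < alpha) are the elements of Field r, for a well-order r
   of order type alpha.  An ordinal length l <= alpha is an initial segment of r. *)
definition init_seg :: "'i rel \<Rightarrow> 'i set \<Rightarrow> bool" where
  "init_seg r L \<longleftrightarrow> L \<subseteq> Field r \<and> (\<forall>x y. y \<in> L \<longrightarrow> (x, y) \<in> r \<longrightarrow> x \<in> L)"

(* A binary word: its set of positions L (= its length, an initial segment) and its
   letters (False = 0, True = 1 of O^{0,1}); letters outside L are normalised to False. *)
type_synonym 'i bword = "'i set \<times> ('i \<Rightarrow> bool)"

(* Words of length l with 1 <= l < alpha+1 over (O^{0,1})_{alpha+1}, where alpha is the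
   order type of r: i.e. Dom(Next(1, alpha+1, (O^{0,1})_{alpha+1})). *)
definition next_dom :: "'i rel \<Rightarrow> 'i bword set" where
  "next_dom r = {(L, w). init_seg r L \<and> L \<noteq> {} \<and> (\<forall>x. x \<notin> L \<longrightarrow> \<not> w x)}"

definition is_question :: "'i rel \<Rightarrow> 'i bword \<Rightarrow> 'i bword \<Rightarrow> 'i \<Rightarrow> bool" where
  "is_question r X Y k \<longleftrightarrow>
     k \<in> fst X \<and> k \<in> fst Y \<and> snd X k \<noteq> snd Y k \<and>
     (\<forall>k'. k' \<in> fst X \<longrightarrow> k' \<in> fst Y \<longrightarrow> (k', k) \<in> r \<longrightarrow> k' \<noteq> k \<longrightarrow> snd X k' = snd Y k')"

definition has_question :: "'i rel \<Rightarrow> 'i bword \<Rightarrow> 'i bword \<Rightarrow> bool" where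
  "has_question r X Y \<longleftrightarrow> (\<exists>k. is_question r X Y k)"

definition next_less :: "'i rel \<Rightarrow> 'i bword \<Rightarrow> 'i bword \<Rightarrow> bool" where
  "next_less r X Y \<longleftrightarrow> (\<exists>k. is_question r X Y k \<and> \<not> snd X k \<and> snd Y k)"

end

theory Submission
  imports Defs
begin

theorem mainTheorem1:
  fixes D :: "'a set" and lt :: "'a \<Rightarrow> 'a \<Rightarrow> bool"
  assumes "total_strict_order_on D lt"
  shows "\<exists>f. (\<forall>x\<in>D. f x \<in> next_dom (card_of D)) \<and> inj_on f D \<and>
             (\<forall>x\<in>D. \<forall>y\<in>D. next_less (card_of D) (f x) (f y) \<longleftrightarrow> lt x y) \<and>
             (\<forall>x\<in>D. \<forall>y\<in>D. x \<noteq> y \<longrightarrow> has_question (card_of D) (f x) (f y))"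
proof -
  let ?r = "card_of D"
  have irr: "\<And>x. x \<in> D \<Longrightarrow> \<not> lt x x" and
    tr: "\<And>x y z. x \<in> D \<Longrightarrow> y \<in> D \<Longrightarrow> z \<in> D \<Longrightarrow> lt x y \<Longrightarrow> lt y z \<Longrightarrow> lt x z" and
    tot: "\<And>x y. x \<in> D \<Longrightarrow> y \<in> D \<Longrightarrow> x \<noteq> y \<Longrightarrow> lt x y \<or> lt y x"
    using assms unfolding total_strict_order_on_def strict_order_on_def by blast+
  have wo: "well_order_on D ?r" by (rule card_of_well_order_on)
  hence wf: "wf (?r - Id)" by (simp add: well_order_on_def)
  have fld: "Field ?r = D" by (rule Field_card_of)
  define f where "f x = (D, \<lambda>d. d \<in> D \<and> lt d x)" for x
  have seg: "init_seg ?r D" unfolding init_seg_def fld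
    by (metis FieldI1 fld order_refl)
  have key: "\<exists>k. is_question ?r (f x) (f y) k \<and> \<not> snd (f x) k \<and> snd (f y) k"
    if xy: "x \<in> D" "y \<in> D" "lt x y" for x y
  proof -
    let ?S = "{d \<in> D. \<not> lt d x \<and> lt d y}"
    have "x \<in> ?S" using xy irr by auto
    then obtain k where k: "k \<in> ?S" and mn: "\<And>k'. (k', k) \<in> ?r - Id \<Longrightarrow> k' \<notin> ?S"
      using wfE_min[OF wf, of x ?S] by blast
    have eq: "lt k' x = lt k' y" if "k' \<in> D" "(k', k) \<in> ?r" "k' \<noteq> k" for k'
    proof -
      have "lt k' x \<or> \<not> lt k' y" using mn that by blast
      thus ?thesis using tr[of k' x y] xy that by blast
    qed
    show ?thesis unfolding is_question_def f_def using k eq by auto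
  qed
  have noq: "\<not> (snd (f x) k \<noteq> snd (f y) k \<and> \<not> snd (f x) k \<and> snd (f y) k)"
    if xy: "x \<in> D" "y \<in> D" "\<not> lt x y" for x y k
    using xy tot[of x y] tr[of k y x] irr unfolding f_def by auto
  have nl: "next_less ?r (f x) (f y) \<longleftrightarrow> lt x y" if "x \<in> D" "y \<in> D" for x y
    using key[OF that] noq[OF that] that unfolding next_less_def is_question_def by blast
  have hq: "has_question ?r (f x) (f y)" if xyD: "x \<in> D" "y \<in> D" "x \<noteq> y" for x y
  proof -
    from tot[OF xyD] show ?thesis
    proof
      assume "lt x y" thus ?thesis using key xyD unfolding has_question_def by blast
    next
      assume "lt y x"
      then obtain k where "is_question ?r (f y) (f x) k" using key[of y x] xyD by blast
      hence "is_question ?r (f x) (f y) k" unfolding is_question_def by metis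
      thus ?thesis unfolding has_question_def by blast
    qed
  qed
  have "inj_on f D"
  proof (rule inj_onI)
    fix x y assume "x \<in> D" "y \<in> D" "f x = f y"
    thus "x = y" using hq[of x y] unfolding has_question_def is_question_def by auto
  qed
  moreover have "\<forall>x\<in>D. f x \<in> next_dom ?r"
    using seg unfolding next_dom_def f_def by auto
  ultimately show ?thesis using nl hq by blast
qed

end
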